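(* Let $n\ge1$, $m \ge 1$ be integers and $\lambda > 1$, $\sigma > 1$ real numbers, and let $a_\alpha$, $a$, $b$ be as in the context. There is a constant $C > 0$ depending only on $n, m, \lambda, \sigma$ such that for every solution $u$ of the inequality $\sum_{|\alpha| = m} (-1)^m \partial^\alpha a_\alpha(x, u) \ge b(x) |u|^\lambda$ in $\mathbb{R}^n$ the following holds: if $0 < r_1 < r_2$ are real numbers with $r_2 = \sqrt{\sigma}\, r_1$, $J(r_2) \le 2J(r_1)$ and $J(r_1) > 0$, then $$J^{1-\lambda}(r_1) - J^{1-\lambda}(r_2) \ge C \int_{r_1}^{r_2} r^{(m-n)\lambda + n - 1} h(r)\, dr,$$ where $J$ and $h$ are defined in the context.
   Context: For each multi-index $\alpha$ with $|\alpha| = m$, $a_\alpha : \mathbb{R}^n \times \mathbb{R} \to \mathbb{R}$ is a given function and $\partial^\alpha = \partial^{|\alpha|}/\partial x_1^{\alpha_1}\cdots\partial x_n^{\alpha_n}$. The function $b : \mathbb{R}^n \to (0,\infty)$ is positive measurable, and $a : \mathbb{R}^n \to (0,\infty)$ is positive measurable with $|a_\alpha(x,\zeta)| \le a(x)|\zeta|$ for almost all $x$, all $\zeta \in \mathbb{R}$, all $|\alpha|=m$. $B_r$ is the open ball of radius $r$ centered at $0$ in $\mathbb{R}^n$. A solution is a function $u$ with $b|u|^\lambda \in L_{1,loc}(\mathbb{R}^n)$, $a_\alpha(x,u) \in L_{1,loc}(\mathbb{R}^n)$ for all $|\alpha|=m$, and $\int_{\mathbb{R}^n} \sum_{|\alpha|=m}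 a_\alpha(x,u)\partial^\alpha\varphi\,dx \ge \int_{\mathbb{R}^n} b|u|^\lambda \varphi\,dx$ for all non-negative $\varphi \in C_0^\infty(\mathbb{R}^n)$. For $r>0$: $J(r) = \int_{B_r} b(x)|u|^\lambda\,dx$ and $$h(r) = \left( \frac{1}{r^n} \int_{B_{\sqrt{\sigma} r} \setminus B_{r/\sqrt{\sigma}}} a^{\lambda/(\lambda-1)}(x) b^{-1/(\lambda-1)}(x)\,dx \right)^{1-\lambda},$$ with $h(r) = 0$ if the integral equals $\infty$. *)

theory Defs
  imports "HOL-Analysis.Analysis"
begin

definition pd :: "'n::finite \<Rightarrow> (real^'n \<Rightarrow> real) \<Rightarrow> (real^'n \<Rightarrow> real)" where
  "pd i g = (\<lambda>x. frechet_derivative g (at x) (axis i 1))"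

definition smooth_fun :: "(real^'n::finite \<Rightarrow> real) \<Rightarrow> bool" where
  "smooth_fun f \<longleftrightarrow> (\<forall>ds x. (foldr pd ds f) differentiable (at x))"

definition test_fun :: "(real^'n::finite \<Rightarrow> real) \<Rightarrow> bool" where
  "test_fun f \<longleftrightarrow> smooth_fun f \<and> compact (closure {x. f x \<noteq> 0})"

text \<open>Multi-index partial derivative: apply pd i exactly alpha i times for each i
  (order irrelevant for smooth functions).\<close>
definition dalpha :: "('n::finite \<Rightarrow> nat) \<Rightarrow> (real^'n \<Rightarrow> real) \<Rightarrow> (real^'n \<Rightarrow> real)" where
  "dalpha \<alpha> f = foldr pd (SOME ds. \<forall>i. count_list ds i = \<alpha> i) f"

definition mi_order :: "('n::finite \<Rightarrow> nat) \<Rightarrow> nat" where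
  "mi_order \<alpha> = (\<Sum>i\<in>UNIV. \<alpha> i)"

definition loc_integrable :: "(real^'n::finite \<Rightarrow> real) \<Rightarrow> bool" where
  "loc_integrable f \<longleftrightarrow> (\<forall>R>0. set_integrable lebesgue (ball 0 R) f)"

text \<open>Weak solution of sum_{|alpha|=m} (-1)^m D^alpha a_alpha(x,u) >= b |u|^lambda.\<close>
definition is_solution ::
  "nat \<Rightarrow> real \<Rightarrow> (('n::finite \<Rightarrow> nat) \<Rightarrow> real^'n \<Rightarrow> real \<Rightarrow> real) \<Rightarrow> (real^'n \<Rightarrow> real)
     \<Rightarrow> (real^'n \<Rightarrow> real) \<Rightarrow> bool" where
  "is_solution m lam aa b u \<longleftrightarrow>
     loc_integrable (\<lambda>x. b x * \<bar>u x\<bar> powr lam) \<and>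
     (\<forall>\<alpha>. mi_order \<alpha> = m \<longrightarrow> loc_integrable (\<lambda>x. aa \<alpha> x (u x))) \<and>
     (\<forall>\<phi>. test_fun \<phi> \<and> (\<forall>x. \<phi> x \<ge> 0) \<longrightarrow>
        (\<integral>x. (\<Sum>\<alpha> | mi_order \<alpha> = m. aa \<alpha> x (u x) * dalpha \<alpha> \<phi> x) \<partial>lebesgue)
          \<ge> (\<integral>x. b x * \<bar>u x\<bar> powr lam * \<phi> x \<partial>lebesgue))"

definition Jfun :: "(real^'n::finite \<Rightarrow> real) \<Rightarrow> real \<Rightarrow> (real^'n \<Rightarrow> real) \<Rightarrow> real \<Rightarrow> real" where
  "Jfun b lam u r = (LINT x:ball 0 r|lebesgue. b x * \<bar>u x\<bar> powr lam)"

definition hfun :: "(real^'n::finite \<Rightarrow> real) \<Rightarrow> (real^'n \<Rightarrow> real) \<Rightarrow> real \<Rightarrow> real \<Rightarrow> real \<Rightarrow> real" where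
  "hfun a b lam \<sigma> r =
     (let I = (\<integral>\<^sup>+ x \<in> ball 0 (sqrt \<sigma> * r) - ball 0 (r / sqrt \<sigma>).
                 ennreal (a x powr (lam / (lam - 1)) * b x powr (- 1 / (lam - 1))) \<partial>lebesgue)
      in if I = \<infinity> then 0 else (enn2real I / r ^ CARD('n)) powr (1 - lam))"

end

theory Submission
  imports Defs "HOL-Computational_Algebra.Polynomial"
begin
fun Pk :: "nat \<Rightarrow> real poly" where
  "Pk 0 = 1"
| "Pk (Suc k) = [:0,0,1:] * (Pk k - pderiv (Pk k))"

definition Ek :: "nat \<Rightarrow> real \<Rightarrow> real" where
  "Ek k t = (if t > 0 then poly (Pk k) (1/t) * exp (-1/t) else 0)"

lemma poly_exp_lim: "((\<lambda>y. poly p (1/y) * exp (-1/y)) \<longlongrightarrow> (0::real)) (at_right 0)"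
proof -
  have "((\<lambda>y. poly p y * exp (-y)) \<longlongrightarrow> (0::real)) at_top"
  proof -
    have "((\<lambda>y. \<Sum>i\<le>degree p. coeff p i * (y ^ i / exp y)) \<longlongrightarrow> (\<Sum>i\<le>degree p. coeff p i * (0::real))) at_top"
      by (intro tendsto_intros tendsto_power_div_exp_0)
    moreover have "(\<lambda>y. \<Sum>i\<le>degree p. coeff p i * (y ^ i / exp y)) = (\<lambda>y. poly p y * exp (-y))"
      by (auto simp: poly_altdef sum_distrib_right exp_minus sum_divide_distrib field_simps)
    ultimately show ?thesis by simp
  qed
  then have "((\<lambda>y. poly p (inverse y) * exp (- inverse y)) \<longlongrightarrow> (0::real)) (at_right 0)"
    using filterlim_at_top_to_right[of "\<lambda>y. poly p y * exp (-y)" "nhds 0"] by simp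
  then show ?thesis by (simp add: inverse_eq_divide)
qed

lemma Ek_deriv_pos:
  assumes "t > 0"
  shows "(Ek k has_real_derivative Ek (Suc k) t) (at t)"
proof -
  have d: "((\<lambda>t. poly (Pk k) (1/t) * exp (-1/t)) has_real_derivative
      poly (pderiv (Pk k)) (1/t) * (- 1 / t^2) * exp (-1/t) + poly (Pk k) (1/t) * (exp (-1/t) * (1/t^2))) (at t)"
    using assms
    by (auto intro!: derivative_eq_intros DERIV_chain2[OF poly_DERIV] simp: power2_eq_square field_simps)
  have e: "poly (pderiv (Pk k)) (1/t) * (- 1 / t^2) * exp (-1/t) + poly (Pk k) (1/t) * (exp (-1/t) * (1/t^2))
       = Ek (Suc k) t"
    using assms by (simp add: Ek_def algebra_simps power2_eq_square)
  show ?thesis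
    apply (rule has_field_derivative_transform_within_open[where S="{0<..}"])
    using d e assms by (auto simp: Ek_def)
qed

lemma Ek_deriv_neg:
  assumes "t < 0"
  shows "(Ek k has_real_derivative Ek (Suc k) t) (at t)"
proof -
  have "((\<lambda>_. 0) has_real_derivative 0) (at t)" by simp
  then have "(Ek k has_real_derivative 0) (at t)"
    apply (rule has_field_derivative_transform_within_open[where S="{..<0}"])
    using assms by (auto simp: Ek_def)
  then show ?thesis using assms by (simp add: Ek_def)
qed

lemma Ek_deriv_0:
  "(Ek k has_real_derivative Ek (Suc k) 0) (at 0)"
proof -
  have l: "((\<lambda>y. (Ek k y - Ek k 0) / (y - 0)) \<longlongrightarrow> 0) (at_left 0)"
  proof (rule tendsto_eventually)
    show "\<forall>\<^sub>F y in at_left 0. (Ek k y - Ek k 0) / (y - 0) = 0"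
      by (auto simp: eventually_at_left_field Ek_def intro: exI[of _ "-1"])
  qed
  have r: "((\<lambda>y. (Ek k y - Ek k 0) / (y - 0)) \<longlongrightarrow> 0) (at_right 0)"
  proof -
    have "((\<lambda>y. poly (pCons 0 (Pk k)) (1/y) * exp (-1/y)) \<longlongrightarrow> (0::real)) (at_right 0)"
      by (rule poly_exp_lim)
    moreover have "\<forall>\<^sub>F y in at_right 0. poly (pCons 0 (Pk k)) (1/y) * exp (-1/y) = (Ek k y - Ek k 0) / (y - 0)"
      by (auto simp: eventually_at_right_field Ek_def intro!: exI[of _ 1])
    ultimately show ?thesis by (rule Lim_transform_eventually)
  qed
  have "((\<lambda>y. (Ek k y - Ek k 0) / (y - 0)) \<longlongrightarrow> 0) (at 0)"
    using l r by (rule filterlim_split_at)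
  then have "(Ek k has_real_derivative 0) (at 0)"
    using has_field_derivative_iff by blast
  then show ?thesis by (simp add: Ek_def)
qed

lemma Ek_deriv: "(Ek k has_real_derivative Ek (Suc k) t) (at t)"
  using Ek_deriv_0 Ek_deriv_pos Ek_deriv_neg by (cases "t > 0"; cases "t < 0") (auto simp: not_less)

inductive_set Gs :: "(real^'n::finite \<Rightarrow> real) set" where
  Gc: "(\<lambda>x. c) \<in> Gs"
| Gx: "(\<lambda>x. x$i) \<in> Gs"
| Ga: "f \<in> Gs \<Longrightarrow> g \<in> Gs \<Longrightarrow> (\<lambda>x. f x + g x) \<in> Gs"
| Gm: "f \<in> Gs \<Longrightarrow> g \<in> Gs \<Longrightarrow> (\<lambda>x. f x * g x) \<in> Gs"
| Ge: "f \<in> Gs \<Longrightarrow> (\<lambda>x. Ek k (f x)) \<in> Gs"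
| Gi: "f \<in> Gs \<Longrightarrow> (\<forall>x. f x \<noteq> 0) \<Longrightarrow> (\<lambda>x. inverse (f x)) \<in> Gs"

lemma Gs_deriv:
  "f \<in> Gs \<Longrightarrow> \<exists>D. (\<forall>i. D i \<in> Gs) \<and> (\<forall>x. (f has_derivative (\<lambda>h. \<Sum>i\<in>UNIV. h$i * D i x)) (at x))"
proof (induction rule: Gs.induct)
  case (Gc c)
  show ?case
    by (rule exI[of _ "\<lambda>i x. 0"]) (auto intro: Gs.Gc)
next
  case (Gx k)
  have "(\<lambda>h::real^'a. \<Sum>i\<in>UNIV. h$i * (if i = k then 1 else 0)) = (\<lambda>h. h$k)"
    by (auto simp: if_distrib cong: if_cong)
  moreover have "((\<lambda>x::real^'a. x$k) has_derivative (\<lambda>h. h$k)) (at x)" for x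
    by (rule bounded_linear_imp_has_derivative) (rule bounded_linear_vec_nth)
  ultimately show ?case
    by (intro exI[of _ "\<lambda>i x. if i = k then 1 else 0"]) (auto intro: Gs.Gc)
next
  case (Ga f g)
  then obtain Df Dg where f: "\<forall>i. Df i \<in> Gs" "\<forall>x. (f has_derivative (\<lambda>h. \<Sum>i\<in>UNIV. h$i * Df i x)) (at x)"
    and g: "\<forall>i. Dg i \<in> Gs" "\<forall>x. (g has_derivative (\<lambda>h. \<Sum>i\<in>UNIV. h$i * Dg i x)) (at x)" by blast
  show ?case
  proof (intro exI[of _ "\<lambda>i x. Df i x + Dg i x"] conjI allI)
    fix i show "(\<lambda>x. Df i x + Dg i x) \<in> Gs" using f g by (auto intro: Gs.Ga)
  next
    fix x
    have "((\<lambda>x. f x + g x) has_derivative (\<lambda>h. (\<Sum>i\<in>UNIV. h$i * Df i x) + (\<Sum>i\<in>UNIV. h$i * Dg i x))) (at x)"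
      using f g by (intro has_derivative_add) auto
    then show "((\<lambda>x. f x + g x) has_derivative (\<lambda>h. \<Sum>i\<in>UNIV. h$i * (Df i x + Dg i x))) (at x)"
      by (simp add: distrib_left sum.distrib)
  qed
next
  case (Gm f g)
  then obtain Df Dg where f: "\<forall>i. Df i \<in> Gs" "\<forall>x. (f has_derivative (\<lambda>h. \<Sum>i\<in>UNIV. h$i * Df i x)) (at x)"
    and g: "\<forall>i. Dg i \<in> Gs" "\<forall>x. (g has_derivative (\<lambda>h. \<Sum>i\<in>UNIV. h$i * Dg i x)) (at x)" by blast
  show ?case
  proof (intro exI[of _ "\<lambda>i x. f x * Dg i x + Df i x * g x"] conjI allI)
    fix i show "(\<lambda>x. f x * Dg i x + Df i x * g x) \<in> Gs" using f g Gm.hyps(1,2)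
      by (intro Gs.Ga[of "\<lambda>x. f x * Dg i x" "\<lambda>x. Df i x * g x", simplified] Gs.Gm) auto
  next
    fix x
    have "((\<lambda>x. f x * g x) has_derivative (\<lambda>h. f x * (\<Sum>i\<in>UNIV. h$i * Dg i x) + (\<Sum>i\<in>UNIV. h$i * Df i x) * g x)) (at x)"
      using f g by (intro has_derivative_mult) auto
    then show "((\<lambda>x. f x * g x) has_derivative (\<lambda>h. \<Sum>i\<in>UNIV. h$i * (f x * Dg i x + Df i x * g x))) (at x)"
      by (simp add: distrib_left sum.distrib sum_distrib_left sum_distrib_right algebra_simps)
  qed
next
  case (Ge f k)
  then obtain Df where f: "\<forall>i. Df i \<in> Gs" "\<forall>x. (f has_derivative (\<lambda>h. \<Sum>i\<in>UNIV. h$i * Df i x)) (at x)"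
    by blast
  show ?case
  proof (intro exI[of _ "\<lambda>i x. Df i x * Ek (Suc k) (f x)"] conjI allI)
    fix i show "(\<lambda>x. Df i x * Ek (Suc k) (f x)) \<in> Gs" using f Ge by (auto intro: Gs.Gm Gs.Ge)
  next
    fix x
    have "((\<lambda>x. Ek k (f x)) has_derivative (\<lambda>h. (\<Sum>i\<in>UNIV. h$i * Df i x) * Ek (Suc k) (f x))) (at x)"
      using f by (intro DERIV_compose_FDERIV Ek_deriv) auto
    then show "((\<lambda>x. Ek k (f x)) has_derivative (\<lambda>h. \<Sum>i\<in>UNIV. h$i * (Df i x * Ek (Suc k) (f x)))) (at x)"
      by (simp add: sum_distrib_left sum_distrib_right mult_ac)
  qed
next
  case (Gi f)
  then obtain Df where f: "\<forall>i. Df i \<in> Gs" "\<forall>x. (f has_derivative (\<lambda>h. \<Sum>i\<in>UNIV. h$i * Df i x)) (at x)"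
    by blast
  have fi: "(\<lambda>x. inverse (f x)) \<in> Gs" using Gi by (auto intro: Gs.Gi)
  show ?case
  proof (intro exI[of _ "\<lambda>i x. Df i x * ((- 1) * (inverse (f x) * inverse (f x)))"] conjI allI)
    fix i show "(\<lambda>x. Df i x * ((- 1) * (inverse (f x) * inverse (f x)))) \<in> Gs"
      by (rule Gs.Gm[OF _ Gs.Gm[OF Gs.Gc Gs.Gm[OF fi fi]]]) (use f in auto)
  next
    fix x
    have d: "((\<lambda>x. inverse (f x)) has_derivative (\<lambda>h. (\<Sum>i\<in>UNIV. h$i * Df i x) * (- (inverse (f x) ^ Suc (Suc 0))))) (at x)"
      using f Gi by (intro DERIV_compose_FDERIV DERIV_inverse) auto
    have eq: "(\<lambda>h. (\<Sum>i\<in>UNIV. h$i * Df i x) * (- (inverse (f x) ^ Suc (Suc 0)))) = (\<lambda>h. \<Sum>i\<in>UNIV. h$i * (Df i x * ((- 1) * (inverse (f x) * inverse (f x)))))"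
      by (rule ext) (simp add: sum_distrib_left sum_distrib_right sum_negf[symmetric] mult_ac)
    show "((\<lambda>x. inverse (f x)) has_derivative (\<lambda>h. \<Sum>i\<in>UNIV. h$i * (Df i x * ((- 1) * (inverse (f x) * inverse (f x)))))) (at x)"
      by (rule subst[where P="\<lambda>D. ((\<lambda>x. inverse (f x)) has_derivative D) (at x)", OF eq d])
  qed
qed

lemma Gs_pd:
  assumes "f \<in> Gs"
  shows "pd i f \<in> Gs" "f differentiable (at x)"
proof -
  obtain D where D: "\<forall>i. D i \<in> Gs" "\<forall>x. (f has_derivative (\<lambda>h. \<Sum>i\<in>UNIV. h$i * D i x)) (at x)"
    using Gs_deriv[OF assms] by blast
  have "pd i f = D i"
  proof
    fix x
    have "frechet_derivative f (at x) = (\<lambda>h. \<Sum>i\<in>UNIV. h$i * D i x)"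
      using D(2) frechet_derivative_at by metis
    moreover have "(\<Sum>j\<in>UNIV. (axis i 1 :: real^'a)$j * D j x) = D i x"
    proof -
      have "(\<Sum>j\<in>UNIV. (axis i 1 :: real^'a)$j * D j x) = (\<Sum>j\<in>UNIV. if j = i then D j x else 0)"
        by (rule sum.cong) (auto simp: axis_def)
      then show ?thesis by simp
    qed
    ultimately show "pd i f x = D i x"
      by (simp add: pd_def)
  qed
  then show "pd i f \<in> Gs" using D by simp
  show "f differentiable (at x)" using D(2) unfolding differentiable_def by blast
qed

lemma Gs_foldr: "f \<in> Gs \<Longrightarrow> foldr pd ds f \<in> Gs"
  by (induction ds) (auto intro: Gs_pd)

lemma Gs_smooth: "f \<in> Gs \<Longrightarrow> smooth_fun f"
  unfolding smooth_fun_def using Gs_foldr Gs_pd(2) by blast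

lemma Gs_sum: "finite S \<Longrightarrow> (\<And>i. i \<in> S \<Longrightarrow> f i \<in> Gs) \<Longrightarrow> (\<lambda>x. \<Sum>i\<in>S. f i x) \<in> Gs"
proof (induction S rule: finite_induct)
  case empty then show ?case by (simp add: Gs.Gc)
next
  case (insert a S) then show ?case by (simp add: Gs.Ga)
qed

lemma Gs_inner: "(\<lambda>x::real^'n::finite. x \<bullet> x) \<in> Gs"
proof -
  have "(\<lambda>x::real^'n. \<Sum>i\<in>UNIV. x$i * x$i) \<in> Gs"
    by (rule Gs_sum) (auto intro: Gs.Gm Gs.Gx)
  then show ?thesis by (simp add: inner_vec_def)
qed

lemma Ek0: "Ek 0 t = (if t > 0 then exp (-1/t) else 0)"
  by (simp add: Ek_def)

definition Phi :: "real \<Rightarrow> real \<Rightarrow> real^'n::finite \<Rightarrow> real" where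
  "Phi c r x = Ek 0 (c - x \<bullet> x / r^2) * inverse (Ek 0 (c - x \<bullet> x / r^2) + Ek 0 (x \<bullet> x / r^2 - 1))"

lemma Ek0_den_pos: "c > 1 \<Longrightarrow> Ek 0 (c - t) + Ek 0 (t - 1) > 0"
  by (cases "t < c"; cases "t > 1") (auto simp: Ek0 add_pos_nonneg add_nonneg_pos)

lemma Phi_Gs: assumes "c > 1" shows "Phi c r \<in> Gs"
proof -
  have A: "(\<lambda>x::real^'a. p + q * (x \<bullet> x)) \<in> Gs" for p q
    by (rule Gs.Ga[OF Gs.Gc Gs.Gm[OF Gs.Gc Gs_inner]])
  have "(\<lambda>x::real^'a. Ek 0 (c + (-1/r^2) * (x \<bullet> x)) * inverse (Ek 0 (c + (-1/r^2) * (x \<bullet> x)) + Ek 0 ((-1) + (1/r^2) * (x \<bullet> x)))) \<in> Gs"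
  proof (rule Gs.Gm[OF Gs.Ge[OF A] Gs.Gi[OF Gs.Ga[OF Gs.Ge[OF A] Gs.Ge[OF A]]]], rule allI)
    fix x :: "real^'a"
    show "Ek 0 (c + - 1 / r\<^sup>2 * (x \<bullet> x)) + Ek 0 (- 1 + 1 / r\<^sup>2 * (x \<bullet> x)) \<noteq> 0"
      using Ek0_den_pos[OF assms, of "x \<bullet> x / r^2"] by (simp add: algebra_simps)
  qed
  moreover have "Phi c r = (\<lambda>x::real^'a. Ek 0 (c + (-1/r^2) * (x \<bullet> x)) * inverse (Ek 0 (c + (-1/r^2) * (x \<bullet> x)) + Ek 0 ((-1) + (1/r^2) * (x \<bullet> x))))"
    by (rule ext) (simp add: Phi_def algebra_simps)
  ultimately show ?thesis by simp
qed

lemma Phi_nonneg: "c > 1 \<Longrightarrow> Phi c r x \<ge> 0"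
  unfolding Phi_def using Ek0_den_pos[of c "x \<bullet> x / r^2"]
  by (intro mult_nonneg_nonneg) (auto simp: Ek0)

lemma Phi_le1: "c > 1 \<Longrightarrow> Phi c r x \<le> 1"
proof -
  assume c: "c > 1"
  define p where "p = Ek 0 (c - x \<bullet> x / r^2)"
  define q where "q = Ek 0 (x \<bullet> x / r^2 - 1)"
  have "p + q > 0" using Ek0_den_pos[OF c, of "x \<bullet> x / r^2"] by (simp add: p_def q_def)
  moreover have "q \<ge> 0" by (simp add: q_def Ek0)
  ultimately have "p * inverse (p + q) \<le> 1" by (simp add: field_simps)
  then show ?thesis by (simp add: Phi_def p_def q_def)
qed

lemma Phi_one: assumes "c > 1" "r > 0" "norm x < r" shows "Phi c r x = 1"
proof -
  have "x \<bullet> x < r^2" using assms by (simp add: power2_norm_eq_inner[symmetric] power_strict_mono)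
  then have "x \<bullet> x / r^2 < 1" using assms by (simp add: field_simps)
  then show ?thesis using assms(1) by (simp add: Phi_def Ek0)
qed

lemma Phi_zero: assumes "c > 1" "r > 0" "norm x > sqrt c * r" shows "Phi c r x = 0"
proof -
  have "(sqrt c * r)^2 < (norm x)^2" using assms by (intro power_strict_mono) auto
  then have "c * r^2 < x \<bullet> x" using assms by (simp add: power2_norm_eq_inner power_mult_distrib)
  then have "c \<le> x \<bullet> x / r^2" using assms by (simp add: field_simps)
  then show ?thesis by (simp add: Phi_def Ek0)
qed

lemma Phi_scale: "r > 0 \<Longrightarrow> Phi c r x = Phi c 1 ((1/r) *\<^sub>R x)"
  by (simp add: Phi_def power2_eq_square field_simps)

lemma pd_apply: "pd i g x = frechet_derivative g (at x) (axis i 1)"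
  by (simp add: pd_def)

lemma foldr_pd_Cons: "foldr pd (i # ds) f x = frechet_derivative (foldr pd ds f) (at x) (axis i 1)"
  by (simp only: foldr_Cons o_apply pd_apply)

lemma foldr_pd_locconst:
  assumes "open U" "\<forall>y\<in>U. f y = c" "ds \<noteq> []" "x \<in> U"
  shows "foldr pd ds f x = 0"
  using assms(3,4)
proof (induction ds arbitrary: x)
  case Nil then show ?case by simp
next
  case (Cons i ds)
  have "\<exists>c'. \<forall>y\<in>U. foldr pd ds f y = c'"
  proof (cases "ds = []")
    case True then show ?thesis using assms(2) by auto
  next
    case False then show ?thesis using Cons.IH by auto
  qed
  then obtain c' where c': "\<forall>y\<in>U. foldr pd ds f y = c'" by blast
  have "((\<lambda>_. c') has_derivative (\<lambda>_. 0)) (at x)" by simp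
  then have "(foldr pd ds f has_derivative (\<lambda>_. 0)) (at x)"
    by (rule has_derivative_transform_within_open[OF _ assms(1) Cons.prems(2)]) (use c' in auto)
  then have "frechet_derivative (foldr pd ds f) (at x) = (\<lambda>_. 0)"
    using frechet_derivative_at by metis
  then show ?case by (simp only: foldr_pd_Cons)
qed

lemma foldr_pd_scale:
  assumes "smooth_fun f"
  shows "foldr pd ds (\<lambda>x. f (s *\<^sub>R x)) = (\<lambda>x. s ^ length ds * foldr pd ds f (s *\<^sub>R x))"
proof (induction ds)
  case Nil then show ?case by simp
next
  case (Cons i ds)
  define H where "H = foldr pd ds f"
  have Hd: "H differentiable (at y)" for y using assms by (simp add: smooth_fun_def H_def)
  show ?case
  proof (rule ext)
    fix x
    define H' where "H' = frechet_derivative H (at (s *\<^sub>R x))"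
    have dH: "(H has_derivative H') (at (s *\<^sub>R x))"
      using Hd H'_def frechet_derivative_works by blast
    have lin: "linear H'" using dH has_derivative_linear by blast
    have sc: "((\<lambda>x. s *\<^sub>R x) has_derivative (\<lambda>h. s *\<^sub>R h)) (at x)"
      by (intro derivative_eq_intros) auto
    have "((\<lambda>x. H (s *\<^sub>R x)) has_derivative (\<lambda>h. H' (s *\<^sub>R h))) (at x)"
      using has_derivative_compose[OF sc, where g=H and g'=H'] dH by simp
    then have "((\<lambda>x. s ^ length ds * H (s *\<^sub>R x)) has_derivative (\<lambda>h. s ^ length ds * H' (s *\<^sub>R h))) (at x)"
      by (rule has_derivative_mult_right)
    then have fd: "frechet_derivative (\<lambda>x. s ^ length ds * H (s *\<^sub>R x)) (at x) = (\<lambda>h. s ^ length ds * H' (s *\<^sub>R h))"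
      using frechet_derivative_at by metis
    have ls: "H' (s *\<^sub>R axis i 1) = s * H' (axis i 1)"
      using lin by (simp add: linear_scale)
    have "foldr pd (i # ds) (\<lambda>x. f (s *\<^sub>R x)) x = frechet_derivative (foldr pd ds (\<lambda>x. f (s *\<^sub>R x))) (at x) (axis i 1)"
      by (rule foldr_pd_Cons)
    also have "\<dots> = frechet_derivative (\<lambda>x. s ^ length ds * H (s *\<^sub>R x)) (at x) (axis i 1)"
      using Cons.IH by (simp only: H_def)
    also have "\<dots> = s ^ length ds * (s * H' (axis i 1))"
      by (simp only: fd ls)
    also have "H' (axis i 1) = foldr pd (i # ds) f (s *\<^sub>R x)"
      by (simp only: H'_def H_def foldr_pd_Cons)
    finally show "foldr pd (i # ds) (\<lambda>x. f (s *\<^sub>R x)) x = s ^ length (i # ds) * foldr pd (i # ds) f (s *\<^sub>R x)"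
      by simp
  qed
qed

lemma count_list_replicate': "count_list (replicate n i) j = (if i = j then n else 0)"
  by (induction n) auto

lemma count_concat_aux:
  "distinct xs \<Longrightarrow> count_list (concat (map (\<lambda>i. replicate (\<alpha> i) i) xs)) j = (if j \<in> set xs then \<alpha> j else 0)"
  by (induction xs) (auto simp: count_list_replicate')

lemma ds_exists: "\<exists>ds. \<forall>i. count_list ds i = (\<alpha>::'n::finite \<Rightarrow> nat) i"
proof -
  obtain xs :: "'n list" where "set xs = UNIV" "distinct xs"
    using finite_distinct_list[of "UNIV :: 'n set"] by auto
  then show ?thesis using count_concat_aux[of xs \<alpha>] by auto
qed

lemma length_count: "length ds = (\<Sum>i\<in>(UNIV::'n::finite set). count_list ds i)"
proof (induction ds)
  case Nil then show ?case by simp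
next
  case (Cons a ds)
  have "(\<Sum>i\<in>(UNIV::'n set). count_list (a # ds) i) = (\<Sum>i\<in>UNIV. count_list ds i + (if a = i then 1 else 0))"
    by (rule sum.cong) auto
  also have "\<dots> = (\<Sum>i\<in>UNIV. count_list ds i) + 1" by (simp add: sum.distrib)
  finally show ?case using Cons by simp
qed

definition dsof :: "('n::finite \<Rightarrow> nat) \<Rightarrow> 'n list" where
  "dsof \<alpha> = (SOME ds. \<forall>i. count_list ds i = \<alpha> i)"

lemma dalpha_dsof: "dalpha \<alpha> f = foldr pd (dsof \<alpha>) f"
  by (simp add: dalpha_def dsof_def)

lemma length_dsof: "length (dsof \<alpha>) = mi_order \<alpha>"
proof -
  have "\<forall>i. count_list (dsof \<alpha>) i = \<alpha> i"
    unfolding dsof_def using ds_exists[of \<alpha>] by (rule someI_ex)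
  then show ?thesis by (simp add: length_count mi_order_def)
qed

lemma finite_mi: "finite {\<alpha>::'n::finite \<Rightarrow> nat. mi_order \<alpha> = m}"
proof -
  have "{\<alpha>::'n \<Rightarrow> nat. mi_order \<alpha> = m} \<subseteq> PiE UNIV (\<lambda>_. {..m})"
  proof
    fix \<alpha> :: "'n \<Rightarrow> nat" assume "\<alpha> \<in> {\<alpha>. mi_order \<alpha> = m}"
    then have "\<alpha> i \<le> m" for i
      unfolding mi_order_def using member_le_sum[of i UNIV \<alpha>] by auto
    then show "\<alpha> \<in> PiE UNIV (\<lambda>_. {..m})" by auto
  qed
  moreover have "finite (PiE (UNIV::'n set) (\<lambda>_. {..m}))" by (intro finite_PiE) auto
  ultimately show ?thesis by (rule finite_subset)
qed

lemma young_pt: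
  fixes a b u t lam :: real
  assumes "a > 0" "b > 0" "t > 0" "lam > 1"
  shows "a * \<bar>u\<bar> \<le> t powr lam / lam * (b * \<bar>u\<bar> powr lam)
           + t powr (- (lam/(lam-1))) / (lam/(lam-1)) * (a powr (lam/(lam-1)) * b powr (- 1 / (lam - 1)))"
proof -
  define q where "q = lam/(lam-1)"
  have q1: "q > 1" using assms by (simp add: q_def field_simps)
  have pq: "1/lam + 1/q = 1" using assms by (simp add: q_def field_simps)
  define A where "A = t * b powr (1/lam) * \<bar>u\<bar>"
  define B where "B = (1/t) * a * b powr (- 1/lam)"
  have AB: "A * B = a * \<bar>u\<bar>"
    using assms by (simp add: A_def B_def powr_minus field_simps)
  have "A * B \<le> A powr lam / lam + B powr q / q"
    by (rule Youngs_inequality; use assms q1 pq in \<open>auto simp: A_def B_def\<close>)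
  moreover have "A powr lam = t powr lam * (b * \<bar>u\<bar> powr lam)"
    using assms by (simp add: A_def powr_mult powr_powr)
  moreover have "B powr q = t powr (-q) * (a powr q * b powr (- 1 / (lam - 1)))"
  proof -
    have "B powr q = ((1/t) * a) powr q * (b powr (-1/lam)) powr q"
      unfolding B_def by (rule powr_mult; use assms in auto)
    also have "((1/t) * a) powr q = (1/t) powr q * a powr q"
      by (rule powr_mult; use assms in auto)
    also have "(b powr (-1/lam)) powr q = b powr (- 1 / (lam - 1))"
      using assms by (simp add: powr_powr q_def field_simps)
    also have "(1/t) powr q = t powr (-q)"
      using assms by (simp add: powr_minus powr_divide inverse_eq_divide)
    finally show ?thesis by simp
  qed
  ultimately show ?thesis using AB by (simp add: q_def mult_ac)
qed

lemma young_opt: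
  fixes J M D I lam :: real
  assumes J: "J > 0" and M: "M > 0" and D: "D \<ge> 0" and I: "I > 0" and lam: "lam > 1"
    and H: "\<And>t. t > 0 \<Longrightarrow> J \<le> M * (t powr lam / lam) * D + M * (t powr (- (lam/(lam-1))) / (lam/(lam-1))) * I"
  shows "J powr lam \<le> (2*M/lam) * (2*M/(lam/(lam-1))) powr (lam-1) * D * I powr (lam-1)"
proof -
  define q where "q = lam/(lam-1)"
  have q: "q > 1" using lam by (simp add: q_def field_simps)
  define X where "X = 2*M*I/(q*J)"
  have X: "X > 0" using assms q by (simp add: X_def)
  define t where "t = X powr (1/q)"
  have t: "t > 0" using X by (simp add: t_def)
  have t1: "t powr (-q) = 1/X" using X q by (simp add: t_def powr_powr powr_minus divide_inverse)
  have lq: "lam / q = lam - 1" using lam by (simp add: q_def field_simps)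
  have t2: "t powr lam = X powr (lam - 1)" using X q lq by (simp add: t_def powr_powr)
  have "M * (t powr (-q) / q) * I = J/2"
    using X q J M I by (simp add: t1 X_def field_simps)
  moreover have h: "J \<le> M * (t powr lam / lam) * D + M * (t powr (-q) / q) * I"
    using H[OF t, folded q_def] .
  ultimately have "J \<le> M * (X powr (lam-1) / lam) * D + J/2" using t2 by (simp only:)
  then have "J \<le> 2 * M / lam * D * X powr (lam-1)" by (simp add: field_simps)
  also have "X powr (lam-1) = (2*M/q) powr (lam-1) * I powr (lam-1) * J powr (1-lam)"
  proof -
    have "X = (2*M/q) * I * inverse J" by (simp add: X_def field_simps)
    moreover have "((2*M/q) * I * inverse J) powr (lam-1) = ((2*M/q) * I) powr (lam-1) * (inverse J) powr (lam-1)"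
      by (rule powr_mult; use assms q in auto)
    moreover have "((2*M/q) * I) powr (lam-1) = (2*M/q) powr (lam-1) * I powr (lam-1)"
      by (rule powr_mult; use assms q in auto)
    ultimately have "X powr (lam-1) = (2*M/q) powr (lam-1) * I powr (lam-1) * (inverse J) powr (lam-1)"
      by simp
    moreover have "(inverse J) powr (lam-1) = J powr (1-lam)"
      using J by (simp add: powr_def ln_inverse algebra_simps)
    ultimately show ?thesis by simp
  qed
  finally have j: "J \<le> 2 * M / lam * D * ((2*M/q) powr (lam-1) * I powr (lam-1) * J powr (1-lam))" .
  define K where "K = 2 * M / lam * D * ((2*M/q) powr (lam-1) * I powr (lam-1))"
  have "J \<le> K * J powr (1-lam)" using j by (simp add: K_def mult_ac)
  then have "J * J powr (lam - 1) \<le> K * J powr (1-lam) * J powr (lam - 1)"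
    using J by (intro mult_right_mono) auto
  also have "\<dots> = K * (J powr (1-lam) * J powr (lam - 1))" by (simp only: mult.assoc)
  also have "J powr (1-lam) * J powr (lam - 1) = 1"
    by (subst powr_add[symmetric]) (use J in simp)
  finally have "J * J powr (lam - 1) \<le> K" by simp
  moreover have "J * J powr (lam - 1) = J powr lam" using J by (simp add: powr_add[symmetric] powr_mult_base)
  ultimately show ?thesis by (simp add: K_def q_def mult_ac)
qed

lemma mvt_bound:
  fixes J1 J2 lam :: real
  assumes "0 < J1" "J1 \<le> J2" "lam > 1"
  shows "J1 powr (1-lam) - J2 powr (1-lam) \<ge> (lam - 1) * J2 powr (-lam) * (J2 - J1)"
proof (cases "J1 = J2")
  case True then show ?thesis by simp
next
  case False
  then have lt: "J1 < J2" using assms by simp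
  have "\<exists>z>J1. z < J2 \<and> (\<lambda>x. x powr (1-lam)) J2 - (\<lambda>x. x powr (1-lam)) J1 = (J2 - J1) * ((1-lam) * z powr (1 - lam - 1))"
    using lt assms(1)
    by (intro MVT2) (auto intro!: derivative_eq_intros)
  then obtain z where z: "J1 < z" "z < J2" "J2 powr (1-lam) - J1 powr (1-lam) = (J2 - J1) * ((1-lam) * z powr (- lam))"
    by auto
  have "J2 powr (-lam) \<le> z powr (-lam)" using z assms by (intro powr_mono2') auto
  then have "(lam - 1) * J2 powr (-lam) * (J2 - J1) \<le> (lam - 1) * z powr (-lam) * (J2 - J1)"
    using lt assms by (intro mult_right_mono mult_left_mono) auto
  then show ?thesis using z by (simp add: algebra_simps)
qed

lemma final_real:
  fixes lam \<sigma> M0 r1 J1 J2 I0 :: real and m :: nat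
  assumes lam: "lam > 1" and sig: "\<sigma> > 1" and m: "m \<ge> 1" and M0: "M0 > 0" and r1: "r1 > 0"
    and J1: "J1 > 0" and J12: "J1 \<le> J2" and J21: "J2 \<le> 2 * J1" and I0: "I0 > 0"
    and Y: "J1 powr lam \<le> (2*(M0 * r1 powr (- real m))/lam) * (2*(M0 * r1 powr (- real m))/(lam/(lam-1))) powr (lam-1) * (J2 - J1) * I0 powr (lam-1)"
  shows "(lam - 1) * 2 powr (-lam) / (((2*M0/lam) * (2*M0/(lam/(lam-1))) powr (lam-1)) * sqrt \<sigma> powr (real m * lam - 1) * (sqrt \<sigma> - 1))
           * (I0 powr (1-lam) * (sqrt \<sigma> * r1) powr (real m * lam - 1) * (sqrt \<sigma> * r1 - r1))
         \<le> J1 powr (1-lam) - J2 powr (1-lam)"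
proof -
  define q where "q = lam/(lam-1)"
  have q: "q > 0" using lam by (simp add: q_def)
  define K0 where "K0 = (2*M0/lam) * (2*M0/q) powr (lam-1)"
  have K0: "K0 > 0" using M0 lam q by (simp add: K0_def)
  define P where "P = (lam - 1) * 2 powr (-lam)"
  define D where "D = J2 - J1"
  have D: "D \<ge> 0" using J12 by (simp add: D_def)
  have s: "sqrt \<sigma> > 1" using sig by simp
  have eK: "(2*(M0 * r1 powr (- real m))/lam) * (2*(M0 * r1 powr (- real m))/q) powr (lam-1) = K0 * r1 powr (- real m * lam)"
  proof -
    have "(2*(M0 * r1 powr (- real m))/q) powr (lam-1) = ((2*M0/q) * r1 powr (- real m)) powr (lam-1)"
      by (simp add: field_simps)
    also have "\<dots> = (2*M0/q) powr (lam-1) * (r1 powr (- real m)) powr (lam-1)"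
      by (rule powr_mult; use M0 q in auto)
    also have "(r1 powr (- real m)) powr (lam-1) = r1 powr (- real m * (lam - 1))"
      by (simp add: powr_powr)
    finally have "(2*(M0 * r1 powr (- real m))/lam) * (2*(M0 * r1 powr (- real m))/q) powr (lam-1)
        = (2*M0/lam) * (2*M0/q) powr (lam-1) * (r1 powr (- real m) * r1 powr (- real m * (lam - 1)))"
      by (simp add: mult_ac)
    also have "r1 powr (- real m) * r1 powr (- real m * (lam - 1)) = r1 powr (- real m * lam)"
      by (simp add: powr_add[symmetric] algebra_simps)
    finally show ?thesis by (simp add: K0_def)
  qed
  have Y': "J1 powr lam \<le> K0 * r1 powr (- real m * lam) * D * I0 powr (lam-1)"
    using Y[folded q_def] unfolding D_def by (simp only: eK)
  have "J2 powr (-lam) \<ge> (2 * J1) powr (-lam)"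
    using J1 J12 J21 lam by (intro powr_mono2') auto
  moreover have "(2 * J1) powr (-lam) = 2 powr (-lam) * J1 powr (-lam)"
    by (rule powr_mult; use J1 in auto)
  ultimately have "J2 powr (-lam) \<ge> 2 powr (-lam) * J1 powr (-lam)" by simp
  then have S1: "J1 powr (1-lam) - J2 powr (1-lam) \<ge> P * (J1 powr (-lam) * D)"
    using mvt_bound[OF J1 J12 lam] lam D
    by (smt (verit, best) P_def D_def mult.assoc mult_left_mono mult_right_mono)
  have S2: "J1 powr (-lam) * D \<ge> r1 powr (real m * lam) * I0 powr (1-lam) / K0"
  proof -
    have a: "J1 powr (-lam) * J1 powr lam = 1" by (subst powr_add[symmetric]) (use J1 in simp)
    have b: "r1 powr (real m * lam) * r1 powr (- real m * lam) = 1" by (subst powr_add[symmetric]) (use r1 in simp)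
    have c: "I0 powr (1-lam) * I0 powr (lam-1) = 1" by (subst powr_add[symmetric]) (use I0 in simp)
    have "r1 powr (real m * lam) * I0 powr (1-lam) / K0 * (J1 powr (-lam) * J1 powr lam)
        \<le> r1 powr (real m * lam) * I0 powr (1-lam) / K0 * (J1 powr (-lam) * (K0 * r1 powr (- real m * lam) * D * I0 powr (lam-1)))"
      using Y' K0 by (intro mult_left_mono) auto
    also have "\<dots> = (J1 powr (-lam) * D) * (K0 / K0) * (r1 powr (real m * lam) * r1 powr (- real m * lam)) * (I0 powr (1-lam) * I0 powr (lam-1))"
      by (simp add: field_simps)
    finally show ?thesis using a b c K0 by simp
  qed
  have S3: "(lam - 1) * 2 powr (-lam) / (K0 * sqrt \<sigma> powr (real m * lam - 1) * (sqrt \<sigma> - 1))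
           * (I0 powr (1-lam) * (sqrt \<sigma> * r1) powr (real m * lam - 1) * (sqrt \<sigma> * r1 - r1))
        = P * (r1 powr (real m * lam) * I0 powr (1-lam) / K0)"
  proof -
    have e1: "(sqrt \<sigma> * r1) powr (real m * lam - 1) = sqrt \<sigma> powr (real m * lam - 1) * r1 powr (real m * lam - 1)"
      by (rule powr_mult; use s r1 in auto)
    have e2: "r1 powr (real m * lam - 1) * r1 = r1 powr (real m * lam)"
      using r1 by (simp add: powr_diff)
    have e3: "sqrt \<sigma> * r1 - r1 = (sqrt \<sigma> - 1) * r1" by (simp add: algebra_simps)
    have gen: "PP / (K * aa * d) * (II * (aa * bb) * (d * rr)) = PP * ((bb * rr) * II / K)"
      if "aa > 0" "d > 0" "K > 0" for PP K aa d II bb rr :: real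
      using that by (simp add: field_simps)
    show ?thesis
      unfolding e1 e3 P_def[symmetric]
      using gen[of "sqrt \<sigma> powr (real m * lam - 1)" "sqrt \<sigma> - 1" K0 P "I0 powr (1-lam)" "r1 powr (real m * lam - 1)" r1] s K0
      using e2 by (simp add: mult_ac)
  qed
  have "P \<ge> 0" using lam by (simp add: P_def)
  then have "P * (r1 powr (real m * lam) * I0 powr (1-lam) / K0) \<le> P * (J1 powr (-lam) * D)"
    using S2 by (intro mult_left_mono) auto
  then show ?thesis using S1 S3 by (simp add: K0_def q_def)
qed

lemma cont_meas_leb: "continuous_on UNIV f \<Longrightarrow> (f :: real^'n::finite \<Rightarrow> real) \<in> borel_measurable lebesgue"
proof -
  assume "continuous_on UNIV f"
  then have "f \<in> borel_measurable borel" by (rule borel_measurable_continuous_onI)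
  then have "f \<in> borel_measurable lborel" by simp
  then show ?thesis by (rule measurable_completion)
qed

lemma Gs_cont: "f \<in> Gs \<Longrightarrow> continuous_on UNIV f"
  using Gs_pd(2) differentiable_imp_continuous_within continuous_at_imp_continuous_on by blast

lemma dalpha_Phi_scale:
  assumes "c > 1" "r > 0"
  shows "dalpha \<alpha> (Phi c r) x = (1/r) ^ mi_order \<alpha> * dalpha \<alpha> (Phi c 1) ((1/r) *\<^sub>R x)"
proof -
  have eq: "Phi c r = (\<lambda>x. Phi c 1 ((1/r) *\<^sub>R x))" using assms(2) by (intro ext Phi_scale)
  show ?thesis
    unfolding dalpha_dsof eq foldr_pd_scale[OF Gs_smooth[OF Phi_Gs[OF assms(1)]]] length_dsof ..
qed

lemma dalpha_Phi1_zero: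
  assumes "c > 1" "mi_order \<alpha> \<ge> 1" "norm y < 1 \<or> norm y > sqrt c"
  shows "dalpha \<alpha> (Phi c 1) y = 0"
proof -
  have ne: "dsof \<alpha> \<noteq> []" using assms(2) length_dsof[of \<alpha>] by auto
  show ?thesis
  proof (cases "norm y < 1")
    case True
    have "foldr pd (dsof \<alpha>) (Phi c 1) y = 0"
      by (rule foldr_pd_locconst[where U="ball 0 1" and c=1]) (use assms True ne Phi_one[OF assms(1), of 1] in auto)
    then show ?thesis by (simp add: dalpha_dsof)
  next
    case False
    then have n: "norm y > sqrt c" using assms by auto
    have "open {z::real^'a. sqrt c < norm z}" by (intro open_Collect_less continuous_intros)
    then have "foldr pd (dsof \<alpha>) (Phi c 1) y = 0"
      by (rule foldr_pd_locconst[where c=0]) (use assms n ne Phi_zero[OF assms(1), of 1] in auto)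
    then show ?thesis by (simp add: dalpha_dsof)
  qed
qed

lemma dalpha_Phi1_bound:
  assumes "c > 1" "m \<ge> 1"
  shows "\<exists>M0>0. \<forall>y::real^'n::finite. (\<Sum>\<alpha>\<in>{\<alpha>::'n \<Rightarrow> nat. mi_order \<alpha> = m}. \<bar>dalpha \<alpha> (Phi c 1) y\<bar>) \<le> M0"
proof -
  define S where "S = (\<lambda>y::real^'n. \<Sum>\<alpha>\<in>{\<alpha>::'n \<Rightarrow> nat. mi_order \<alpha> = m}. \<bar>dalpha \<alpha> (Phi c 1) y\<bar>)"
  have "continuous_on UNIV (dalpha \<alpha> (Phi c 1))" for \<alpha> :: "'n \<Rightarrow> nat"
    unfolding dalpha_dsof by (intro Gs_cont Gs_foldr Phi_Gs assms)
  then have cS: "continuous_on UNIV S" unfolding S_def by (intro continuous_intros) auto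
  have "compact (S ` cball 0 (sqrt c))"
    by (rule compact_continuous_image) (use cS continuous_on_subset in auto)
  then obtain B where B: "\<forall>z\<in>S ` cball 0 (sqrt c). norm z \<le> B"
    using compact_imp_bounded bounded_iff by metis
  have "S y \<le> max B 0 + 1" for y
  proof (cases "norm y \<le> sqrt c")
    case True then show ?thesis using B by force
  next
    case False
    have "dalpha \<alpha> (Phi c 1) y = 0" if "\<alpha> \<in> {\<alpha>::'n \<Rightarrow> nat. mi_order \<alpha> = m}" for \<alpha>
      by (rule dalpha_Phi1_zero[OF assms(1)]) (use that assms(2) False in auto)
    then have "S y = 0" unfolding S_def by (intro sum.neutral ballI) auto
    then show ?thesis by simp
  qed
  then show ?thesis unfolding S_def by (intro exI[of _ "max B 0 + 1"]) auto
qed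

lemma key_ineq:
  fixes aa :: "('n::finite \<Rightarrow> nat) \<Rightarrow> real^'n \<Rightarrow> real \<Rightarrow> real" and a b u :: "real^'n \<Rightarrow> real"
  assumes lam: "lam > 1" and sig: "\<sigma> > 1" and m: "m \<ge> 1"
    and bm: "b \<in> borel_measurable lebesgue" and bpos: "\<forall>x. b x > 0"
    and am: "a \<in> borel_measurable lebesgue" and apos: "\<forall>x. a x > 0"
    and AEb: "AE x in lebesgue. \<forall>\<alpha> \<zeta>. mi_order \<alpha> = m \<longrightarrow> \<bar>aa \<alpha> x \<zeta>\<bar> \<le> a x * \<bar>\<zeta>\<bar>"
    and sol: "is_solution m lam aa b u"
    and r1: "0 < r1" and r12: "r1 < r2" and r2: "r2 = sqrt \<sigma> * r1"
    and c: "c = (1+\<sigma>)/2"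
    and M0: "\<forall>y::real^'n. (\<Sum>\<alpha>\<in>{\<alpha>::'n\<Rightarrow>nat. mi_order \<alpha> = m}. \<bar>dalpha \<alpha> (Phi c 1) y\<bar>) \<le> M0"
    and t: "t > 0"
  shows "ennreal (Jfun b lam u r1) \<le> ennreal (M0 * r1 powr (- real m) * (t powr lam / lam)) * ennreal (Jfun b lam u r2 - Jfun b lam u r1)
     + ennreal (M0 * r1 powr (- real m) * (t powr (-(lam/(lam-1))) / (lam/(lam-1)))) *
       (\<integral>\<^sup>+ x \<in> ball 0 r2 - ball 0 r1. ennreal (a x powr (lam / (lam - 1)) * b x powr (- 1 / (lam - 1))) \<partial>lebesgue)"
    and "Jfun b lam u r1 \<le> Jfun b lam u r2"
proof -
  define f where "f x = b x * \<bar>u x\<bar> powr lam" for x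
  define \<phi> :: "real^'n \<Rightarrow> real" where "\<phi> = Phi c r1"
  define A where "A = ball (0::real^'n) r2 - ball 0 r1"
  define w where "w x = a x powr (lam / (lam - 1)) * b x powr (- 1 / (lam - 1))" for x
  define q where "q = lam/(lam-1)"
  define M where "M = M0 * r1 powr (- real m)"
  define Am where "Am = {\<alpha>::'n\<Rightarrow>nat. mi_order \<alpha> = m}"
  have c1: "c > 1" using sig c by simp
  have "sqrt c < sqrt \<sigma>" using sig c by simp
  then have csig: "sqrt c * r1 < r2" using r1 r2 by simp
  have r2pos: "r2 > 0" using r1 r12 by simp
  have fnn: "f x \<ge> 0" for x using bpos by (simp add: f_def less_imp_le)
  have intR: "integrable lebesgue (\<lambda>x. indicator (ball 0 R) x *\<^sub>R f x)" if "R > 0" for R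
    using sol that unfolding is_solution_def loc_integrable_def set_integrable_def f_def by blast
  have JR: "Jfun b lam u R = (\<integral>x. indicator (ball 0 R) x *\<^sub>R f x \<partial>lebesgue)" for R
    by (simp add: Jfun_def set_lebesgue_integral_def f_def)
  have phi0: "\<phi> x \<ge> 0" for x using Phi_nonneg[OF c1] by (simp add: \<phi>_def)
  have phi1: "\<phi> x \<le> 1" for x using Phi_le1[OF c1] by (simp add: \<phi>_def)
  have phiin: "\<phi> x = 1" if "norm x < r1" for x using Phi_one[OF c1 r1 that] by (simp add: \<phi>_def)
  have phiout: "\<phi> x = 0" if "norm x \<ge> r2" for x using Phi_zero[OF c1 r1, of x] that csig by (simp add: \<phi>_def)
  have phiG: "\<phi> \<in> Gs" using Phi_Gs[OF c1] by (simp add: \<phi>_def)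
  have phimeas: "\<phi> \<in> borel_measurable lebesgue" by (rule cont_meas_leb[OF Gs_cont[OF phiG]])
  have test: "test_fun \<phi>"
  proof -
    have sub: "{x. \<phi> x \<noteq> 0} \<subseteq> cball 0 r2"
      using phiout by (force simp: not_le[symmetric])
    have "closure {x. \<phi> x \<noteq> 0} \<subseteq> cball 0 r2"
      by (rule closure_minimal[OF sub closed_cball])
    then have "closure {x. \<phi> x \<noteq> 0} = closure {x. \<phi> x \<noteq> 0} \<inter> cball 0 r2" by blast
    moreover have "compact (closure {x. \<phi> x \<noteq> 0} \<inter> cball 0 r2)"
      by (rule closed_Int_compact) auto
    ultimately have "compact (closure {x. \<phi> x \<noteq> 0})" by simp
    then show ?thesis unfolding test_fun_def using Gs_smooth[OF phiG] by simp
  qed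
  define g where "g x = (\<Sum>\<alpha>\<in>Am. aa \<alpha> x (u x) * dalpha \<alpha> \<phi> x)" for x
  have solineq: "(\<integral>x. g x \<partial>lebesgue) \<ge> (\<integral>x. f x * \<phi> x \<partial>lebesgue)"
    using sol test phi0 unfolding is_solution_def g_def Am_def f_def by blast
  have ind2: "integrable lebesgue (\<lambda>x. indicator (ball 0 r2) x *\<^sub>R f x)" using intR r2pos by blast
  have eqfp: "f x * \<phi> x = (indicator (ball 0 r2) x *\<^sub>R f x) * \<phi> x" for x
    using phiout[of x] by (cases "x \<in> ball 0 r2") auto
  have intfp: "integrable lebesgue (\<lambda>x. f x * \<phi> x)"
  proof (rule Bochner_Integration.integrable_bound[OF ind2])
    show "(\<lambda>x. f x * \<phi> x) \<in> borel_measurable lebesgue"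
      unfolding eqfp by (intro borel_measurable_times borel_measurable_integrable[OF ind2] phimeas)
    show "AE x in lebesgue. norm (f x * \<phi> x) \<le> norm (indicator (ball 0 r2) x *\<^sub>R f x)"
    proof (rule AE_I2)
      fix x
      have "\<bar>indicator (ball 0 r2) x *\<^sub>R f x\<bar> * \<bar>\<phi> x\<bar> \<le> \<bar>indicator (ball 0 r2) x *\<^sub>R f x\<bar> * 1"
        using phi0[of x] phi1[of x] by (intro mult_left_mono) auto
      then show "norm (f x * \<phi> x) \<le> norm (indicator (ball 0 r2) x *\<^sub>R f x)"
        by (subst eqfp) (simp add: abs_mult)
    qed
  qed
  have A1: "Jfun b lam u r1 \<le> (\<integral>x. f x * \<phi> x \<partial>lebesgue)"
    unfolding JR
  proof (rule integral_mono[OF intR[OF r1] intfp])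
    fix x
    show "indicator (ball 0 r1) x *\<^sub>R f x \<le> f x * \<phi> x"
      using phiin[of x] fnn[of x] phi0[of x] by (cases "x \<in> ball 0 r1") auto
  qed
  have C: "ennreal (\<integral>x. g x \<partial>lebesgue) \<le> (\<integral>\<^sup>+ x. ennreal \<bar>g x\<bar> \<partial>lebesgue)"
  proof (cases "integrable lebesgue g")
    case True
    have "ennreal (\<integral>x. g x \<partial>lebesgue) \<le> ennreal (norm (\<integral>x. g x \<partial>lebesgue))"
      by (intro ennreal_leI) simp
    also have "\<dots> \<le> (\<integral>\<^sup>+ x. ennreal (norm (g x)) \<partial>lebesgue)"
      by (rule integral_norm_bound_ennreal[OF True])
    finally show ?thesis by simp
  next
    case False then show ?thesis by (simp add: not_integrable_integral_eq)
  qed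
  define k1 where "k1 = M * (t powr lam / lam)"
  define k2 where "k2 = M * (t powr (-q) / q)"
  have M0nn: "M0 \<ge> 0" using M0 by (metis (no_types, lifting) order_trans sum_nonneg abs_ge_zero)
  have Mnn: "M \<ge> 0" using M0nn r1 by (simp add: M_def)
  have k1: "k1 \<ge> 0" using Mnn t lam by (simp add: k1_def)
  have k2: "k2 \<ge> 0" using Mnn t lam by (simp add: k2_def q_def)
  have finAm: "finite Am" unfolding Am_def by (rule finite_mi)
  have wnn: "w x \<ge> 0" for x by (simp add: w_def)
  have D: "AE x in lebesgue. \<bar>g x\<bar> \<le> k1 * (indicator A x * f x) + k2 * (indicator A x * w x)"
    using AEb
  proof (rule AE_mp, intro AE_I2 impI)
    fix x assume P: "\<forall>\<alpha> \<zeta>. mi_order \<alpha> = m \<longrightarrow> \<bar>aa \<alpha> x \<zeta>\<bar> \<le> a x * \<bar>\<zeta>\<bar>"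
    define y where "y = (1/r1) *\<^sub>R x"
    have ny: "norm y = norm x / r1" using r1 by (simp add: y_def)
    have dsc: "dalpha \<alpha> \<phi> x = (1/r1) ^ m * dalpha \<alpha> (Phi c 1) y" if "\<alpha> \<in> Am" for \<alpha>
      using dalpha_Phi_scale[OF c1 r1, of \<alpha> x] that by (simp add: Am_def \<phi>_def y_def)
    show "\<bar>g x\<bar> \<le> k1 * (indicator A x * f x) + k2 * (indicator A x * w x)"
    proof (cases "x \<in> A")
      case False
      then have "norm x < r1 \<or> norm x \<ge> r2" by (auto simp: A_def)
      then have "norm y < 1 \<or> norm y > sqrt c"
      proof
        assume "norm x < r1" then show ?thesis using r1 ny by simp
      next
        assume "norm x \<ge> r2"
        then have "sqrt c * r1 < norm x" using csig by simp
        then show ?thesis using r1 ny by (simp add: pos_less_divide_eq)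
      qed
      then have "dalpha \<alpha> \<phi> x = 0" if "\<alpha> \<in> Am" for \<alpha>
        using dsc[OF that] dalpha_Phi1_zero[OF c1, of \<alpha> y] that m by (simp add: Am_def)
      then have "g x = 0" unfolding g_def by simp
      then show ?thesis using False by simp
    next
      case True
      have "\<bar>g x\<bar> \<le> (\<Sum>\<alpha>\<in>Am. \<bar>aa \<alpha> x (u x)\<bar> * \<bar>dalpha \<alpha> \<phi> x\<bar>)"
        unfolding g_def by (rule order_trans[OF sum_abs]) (simp add: abs_mult)
      also have "\<dots> \<le> (\<Sum>\<alpha>\<in>Am. a x * \<bar>u x\<bar> * \<bar>dalpha \<alpha> \<phi> x\<bar>)"
        using P by (intro sum_mono mult_right_mono) (auto simp: Am_def)
      also have "\<dots> = a x * \<bar>u x\<bar> * ((1/r1) ^ m * (\<Sum>\<alpha>\<in>Am. \<bar>dalpha \<alpha> (Phi c 1) y\<bar>))"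
        using r1 by (simp add: sum_distrib_left dsc abs_mult)
      also have "\<dots> \<le> a x * \<bar>u x\<bar> * ((1/r1) ^ m * M0)"
        using M0 apos r1 by (intro mult_left_mono) (auto simp: Am_def less_imp_le)
      also have "(1/r1) ^ m * M0 = M"
        using r1 by (simp add: M_def powr_minus powr_realpow power_one_over divide_inverse power_inverse)
      also have "a x * \<bar>u x\<bar> * M \<le> (t powr lam / lam * f x + t powr (-q) / q * w x) * M"
        using young_pt[of "a x" "b x" t lam "u x"] apos bpos t lam Mnn
        by (intro mult_right_mono) (auto simp: f_def w_def q_def)
      also have "\<dots> = k1 * (indicator A x * f x) + k2 * (indicator A x * w x)"
        using True by (simp add: k1_def k2_def algebra_simps)
      finally show ?thesis .
    qed
  qed
  have eqA: "indicator A x * f x = indicator (ball 0 r2) x *\<^sub>R f x - indicator (ball 0 r1) x *\<^sub>R f x" for x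
    using r12 by (cases "x \<in> ball 0 r1"; cases "x \<in> ball 0 r2") (auto simp: A_def indicator_def)
  have ind1: "integrable lebesgue (\<lambda>x. indicator (ball 0 r1) x *\<^sub>R f x)" using intR r1 by blast
  have intA: "integrable lebesgue (\<lambda>x. indicator A x * f x)"
    unfolding eqA by (intro Bochner_Integration.integrable_diff ind1 ind2)
  have Ameas: "A \<in> sets lebesgue" by (auto simp: A_def)
  have wmeas: "w \<in> borel_measurable lebesgue"
    unfolding w_def by (intro borel_measurable_times powr_real_measurable am bm measurable_const) auto
  have intAeq: "(\<integral>x. indicator A x * f x \<partial>lebesgue) = Jfun b lam u r2 - Jfun b lam u r1"
    unfolding eqA JR by (rule Bochner_Integration.integral_diff[OF ind2 ind1])
  have F: "(\<integral>\<^sup>+ x. ennreal (indicator A x * f x) \<partial>lebesgue) = ennreal (Jfun b lam u r2 - Jfun b lam u r1)"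
    using nn_integral_eq_integral[OF intA] fnn intAeq by simp
  show "Jfun b lam u r1 \<le> Jfun b lam u r2"
  proof -
    have "0 \<le> (\<integral>x. indicator A x * f x \<partial>lebesgue)"
      by (rule integral_nonneg_AE) (use fnn in simp)
    then show ?thesis using intAeq by simp
  qed
  have G: "(\<integral>\<^sup>+ x. ennreal (indicator A x * w x) \<partial>lebesgue) = (\<integral>\<^sup>+ x \<in> A. ennreal (w x) \<partial>lebesgue)"
    by (rule nn_integral_cong) (auto simp: indicator_def)
  have E: "(\<integral>\<^sup>+ x. ennreal \<bar>g x\<bar> \<partial>lebesgue)
      \<le> ennreal k1 * (\<integral>\<^sup>+ x. ennreal (indicator A x * f x) \<partial>lebesgue) + ennreal k2 * (\<integral>\<^sup>+ x. ennreal (indicator A x * w x) \<partial>lebesgue)"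
  proof -
    have "(\<integral>\<^sup>+ x. ennreal \<bar>g x\<bar> \<partial>lebesgue)
        \<le> (\<integral>\<^sup>+ x. ennreal k1 * ennreal (indicator A x * f x) + ennreal k2 * ennreal (indicator A x * w x) \<partial>lebesgue)"
    proof (rule nn_integral_mono_AE)
      show "AE x in lebesgue. ennreal \<bar>g x\<bar> \<le> ennreal k1 * ennreal (indicator A x * f x) + ennreal k2 * ennreal (indicator A x * w x)"
        using D
      proof (rule AE_mp, intro AE_I2 impI)
        fix x assume "\<bar>g x\<bar> \<le> k1 * (indicator A x * f x) + k2 * (indicator A x * w x)"
        then have "ennreal \<bar>g x\<bar> \<le> ennreal (k1 * (indicator A x * f x) + k2 * (indicator A x * w x))"
          by (rule ennreal_leI)
        also have "\<dots> = ennreal k1 * ennreal (indicator A x * f x) + ennreal k2 * ennreal (indicator A x * w x)"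
          using k1 k2 fnn[of x] wnn[of x]
          by (simp add: ennreal_plus ennreal_mult)
        finally show "ennreal \<bar>g x\<bar> \<le> ennreal k1 * ennreal (indicator A x * f x) + ennreal k2 * ennreal (indicator A x * w x)" .
      qed
    qed
    also have "\<dots> = ennreal k1 * (\<integral>\<^sup>+ x. ennreal (indicator A x * f x) \<partial>lebesgue) + ennreal k2 * (\<integral>\<^sup>+ x. ennreal (indicator A x * w x) \<partial>lebesgue)"
    proof -
      have m1: "(\<lambda>x. ennreal (indicator A x * f x)) \<in> borel_measurable lebesgue"
        using borel_measurable_integrable[OF intA] by measurable
      have m2: "(\<lambda>x. ennreal (indicator A x * w x)) \<in> borel_measurable lebesgue"
        using wmeas Ameas by measurable
      show ?thesis
        using m1 m2 by (simp add: nn_integral_add nn_integral_cmult)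
    qed
    finally show ?thesis .
  qed
  have "ennreal (Jfun b lam u r1) \<le> ennreal (\<integral>x. g x \<partial>lebesgue)"
    using A1 solineq by (intro ennreal_leI) simp
  also have "\<dots> \<le> ennreal k1 * ennreal (Jfun b lam u r2 - Jfun b lam u r1) + ennreal k2 * (\<integral>\<^sup>+ x \<in> A. ennreal (w x) \<partial>lebesgue)"
    using C E F G by simp
  finally show "ennreal (Jfun b lam u r1) \<le> ennreal (M0 * r1 powr (- real m) * (t powr lam / lam)) * ennreal (Jfun b lam u r2 - Jfun b lam u r1)
     + ennreal (M0 * r1 powr (- real m) * (t powr (-(lam/(lam-1))) / (lam/(lam-1)))) *
       (\<integral>\<^sup>+ x \<in> ball 0 r2 - ball 0 r1. ennreal (a x powr (lam / (lam - 1)) * b x powr (- 1 / (lam - 1))) \<partial>lebesgue)"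
    by (simp add: k1_def k2_def M_def q_def A_def w_def)
qed

lemma annulus_sub:
  fixes r r1 r2 \<sigma> :: real
  assumes "\<sigma> > 1" "r1 > 0" "r2 = sqrt \<sigma> * r1" "r1 \<le> r" "r \<le> r2"
  shows "ball (0::real^'n::finite) r2 - ball 0 r1 \<subseteq> ball 0 (sqrt \<sigma> * r) - ball 0 (r / sqrt \<sigma>)"
proof
  fix x :: "real^'n" assume x: "x \<in> ball 0 r2 - ball 0 r1"
  have s: "sqrt \<sigma> > 1" using assms by simp
  have "norm x < sqrt \<sigma> * r" using x assms s by (auto intro: less_le_trans)
  moreover have "r / sqrt \<sigma> \<le> r1" using assms s by (simp add: divide_le_eq mult.commute)
  then have "r / sqrt \<sigma> \<le> norm x" using x by auto
  ultimately show "x \<in> ball 0 (sqrt \<sigma> * r) - ball 0 (r / sqrt \<sigma>)" by auto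
qed

lemma annulus_mono:
  fixes a b :: "real^'n::finite \<Rightarrow> real" and r r1 r2 \<sigma> :: real
  assumes "\<sigma> > 1" "r1 > 0" "r2 = sqrt \<sigma> * r1" "r1 \<le> r" "r \<le> r2"
  shows "(\<integral>\<^sup>+ x \<in> ball 0 r2 - ball 0 r1. ennreal (a x powr (lam / (lam - 1)) * b x powr (- 1 / (lam - 1))) \<partial>lebesgue)
     \<le> (\<integral>\<^sup>+ x \<in> ball 0 (sqrt \<sigma> * r) - ball 0 (r / sqrt \<sigma>). ennreal (a x powr (lam / (lam - 1)) * b x powr (- 1 / (lam - 1))) \<partial>lebesgue)"
  using annulus_sub[OF assms, where 'n='n]
  by (intro nn_integral_mono) (auto simp: indicator_def)

lemma hfun_zero:
  fixes a b :: "real^'n::finite \<Rightarrow> real" and r r1 r2 \<sigma> :: real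
  assumes "\<sigma> > 1" "r1 > 0" "r2 = sqrt \<sigma> * r1" "r1 \<le> r" "r \<le> r2"
    and "(\<integral>\<^sup>+ x \<in> ball 0 r2 - ball 0 r1. ennreal (a x powr (lam / (lam - 1)) * b x powr (- 1 / (lam - 1))) \<partial>lebesgue) = \<infinity>"
  shows "hfun a b lam \<sigma> r = 0"
  using annulus_mono[OF assms(1-5), of a lam b] assms(6) by (simp add: hfun_def Let_def top_unique)

lemma hfun_bound:
  fixes a b :: "real^'n::finite \<Rightarrow> real" and r r1 r2 \<sigma> lam I0 :: real and m :: nat
  assumes sig: "\<sigma> > 1" and r1: "r1 > 0" and r2: "r2 = sqrt \<sigma> * r1" and rr: "r1 \<le> r" "r \<le> r2"
    and lam: "lam > 1" and m: "m \<ge> 1" and I0: "I0 > 0"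
    and Ile: "ennreal I0 \<le> (\<integral>\<^sup>+ x \<in> ball 0 r2 - ball 0 r1. ennreal (a x powr (lam / (lam - 1)) * b x powr (- 1 / (lam - 1))) \<partial>lebesgue)"
  shows "r powr ((real m - real CARD('n)) * lam + real CARD('n) - 1) * hfun a b lam \<sigma> r
     \<le> I0 powr (1-lam) * r2 powr (real m * lam - 1)"
proof -
  define I where "I = (\<integral>\<^sup>+ x \<in> ball 0 (sqrt \<sigma> * r) - ball 0 (r / sqrt \<sigma>). ennreal (a x powr (lam / (lam - 1)) * b x powr (- 1 / (lam - 1))) \<partial>lebesgue)"
  define n where "n = real CARD('n)"
  have rpos: "r > 0" using r1 rr by simp
  have II: "ennreal I0 \<le> I" using Ile annulus_mono[OF sig r1 r2 rr, of a lam b] by (simp add: I_def)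
  have rhs: "I0 powr (1-lam) * r2 powr (real m * lam - 1) \<ge> 0" by simp
  show ?thesis
  proof (cases "I = \<infinity>")
    case True
    then have "hfun a b lam \<sigma> r = 0" by (simp add: hfun_def Let_def I_def)
    then show ?thesis using rhs by simp
  next
    case False
    then have h: "hfun a b lam \<sigma> r = (enn2real I / r ^ CARD('n)) powr (1 - lam)"
      by (simp add: hfun_def Let_def I_def)
    have "I0 \<le> enn2real I"
      using II False enn2real_mono[OF II] I0 by (simp add: top.not_eq_extremum)
    then have "I0 / r ^ CARD('n) \<le> enn2real I / r ^ CARD('n)" using rpos by (simp add: divide_right_mono)
    then have "(enn2real I / r ^ CARD('n)) powr (1 - lam) \<le> (I0 / r ^ CARD('n)) powr (1 - lam)"
      using I0 rpos lam by (intro powr_mono2') auto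
    also have "(I0 / r ^ CARD('n)) powr (1 - lam) = I0 powr (1-lam) * r powr (n * (lam - 1))"
    proof -
      have "(I0 / r ^ CARD('n)) powr (1 - lam) = I0 powr (1-lam) / (r ^ CARD('n)) powr (1 - lam)"
        using I0 rpos by (simp add: powr_divide)
      also have "(r ^ CARD('n)) powr (1 - lam) = r powr (n * (1 - lam))"
        using rpos by (simp add: n_def powr_realpow[symmetric] powr_powr)
      also have "I0 powr (1-lam) / r powr (n * (1 - lam)) = I0 powr (1-lam) * r powr (n * (lam - 1))"
      proof -
        have e: "r powr (n * (lam - 1)) * r powr (n * (1 - lam)) = 1"
        proof -
          have z: "n * (lam - 1) + n * (1 - lam) = 0" by (simp add: algebra_simps)
          have "r powr (n * (lam - 1)) * r powr (n * (1 - lam)) = r powr (n * (lam - 1) + n * (1 - lam))"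
            by (simp only: powr_add)
          then show ?thesis using rpos by (simp only: z) simp
        qed
        have p: "r powr (n * (1 - lam)) > 0" using rpos by simp
        have "r powr (n * (lam - 1)) = 1 / r powr (n * (1 - lam))"
          using e p by (simp add: eq_divide_eq)
        then show ?thesis by simp
      qed
      finally show ?thesis .
    qed
    finally have hb: "hfun a b lam \<sigma> r \<le> I0 powr (1-lam) * r powr (n * (lam - 1))" using h by simp
    have z: "(real m - n) * lam + n - 1 + n * (lam - 1) = real m * lam - 1" by (simp add: algebra_simps)
    have pe: "r powr ((real m - n) * lam + n - 1) * r powr (n * (lam - 1)) = r powr (real m * lam - 1)"
      by (simp only: powr_add[symmetric] z)
    have m1: "real m \<ge> 1" using m by simp
    have ml: "real m * lam \<ge> 1" using mult_mono[OF m1, of 1 lam] lam by simp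
    have rr2: "r powr (real m * lam - 1) \<le> r2 powr (real m * lam - 1)"
      by (rule powr_mono2) (use ml rpos rr in auto)
    have "r powr ((real m - n) * lam + n - 1) * hfun a b lam \<sigma> r
        \<le> r powr ((real m - n) * lam + n - 1) * (I0 powr (1-lam) * r powr (n * (lam - 1)))"
      using hb by (intro mult_left_mono) auto
    also have "\<dots> = I0 powr (1-lam) * r powr (real m * lam - 1)"
      using pe by (simp only: mult_ac)
    also have "\<dots> \<le> I0 powr (1-lam) * r2 powr (real m * lam - 1)"
      using rr2 by (intro mult_left_mono) auto
    finally show ?thesis unfolding n_def .
  qed
qed

lemma I0_zero_False:
  fixes J M D lam :: real
  assumes J: "J > 0" and M: "M > 0" and D: "D \<ge> 0" and lam: "lam > 1"
    and H: "\<And>t. t > 0 \<Longrightarrow> J \<le> M * (t powr lam / lam) * D + M * (t powr (- (lam/(lam-1))) / (lam/(lam-1))) * 0"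
  shows False
proof -
  define t where "t = (J * lam / (2 * M * (D + 1))) powr (1/lam)"
  have X: "J * lam / (2 * M * (D + 1)) > 0" using J M D lam by simp
  have t: "t > 0" using J M D lam by (simp add: t_def)
  have "t powr lam = (J * lam / (2 * M * (D + 1))) powr 1" using lam by (simp add: t_def powr_powr)
  then have "t powr lam = J * lam / (2 * M * (D + 1))" by (metis X less_imp_le powr_one)
  then have "M * (t powr lam / lam) * D = M * (J * lam / (2 * M * (D + 1)) / lam) * D" by simp
  also have "\<dots> = J * (D / (2 * (D + 1)))"
  proof -
    have gen: "M * (J * lam / (2 * M * E) / lam) * D = J * (D / (2 * E))" if "E \<noteq> 0" for E
      using that M lam by (simp add: field_simps)
    have "D + 1 \<noteq> 0" using D by simp
    then show ?thesis by (rule gen)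
  qed
  finally have "M * (t powr lam / lam) * D = J * (D / (2 * (D + 1)))" .
  moreover have "D / (2 * (D + 1)) < 1" using D by (simp add: field_simps)
  ultimately have "M * (t powr lam / lam) * D < J" using J by (metis mult.right_neutral mult_strict_left_mono)
  then show False using H[OF t] by simp
qed

theorem lemma3p3:
  fixes m :: nat and lam \<sigma> :: real
  assumes "m \<ge> 1" and "lam > 1" and "\<sigma> > 1"
  shows "\<exists>C>0. \<forall>(aa :: ('n::finite \<Rightarrow> nat) \<Rightarrow> real^'n \<Rightarrow> real \<Rightarrow> real) a b u r1 r2.
     (b \<in> borel_measurable lebesgue \<and> (\<forall>x. b x > 0) \<and>
      a \<in> borel_measurable lebesgue \<and> (\<forall>x. a x > 0) \<and>
      (AE x in lebesgue. \<forall>\<alpha> \<zeta>. mi_order \<alpha> = m \<longrightarrow> \<bar>aa \<alpha> x \<zeta>\<bar> \<le> a x * \<bar>\<zeta>\<bar>) \<and>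
      is_solution m lam aa b u \<and>
      0 < r1 \<and> r1 < r2 \<and> r2 = sqrt \<sigma> * r1 \<and>
      Jfun b lam u r2 \<le> 2 * Jfun b lam u r1 \<and> Jfun b lam u r1 > 0)
     \<longrightarrow> ennreal (Jfun b lam u r1 powr (1 - lam) - Jfun b lam u r2 powr (1 - lam))
         \<ge> ennreal C * (\<integral>\<^sup>+ r \<in> {r1..r2}.
               ennreal (r powr ((real m - real CARD('n)) * lam + real CARD('n) - 1) * hfun a b lam \<sigma> r) \<partial>lborel)"
proof -
  note m = assms(1) and lam = assms(2) and sig = assms(3)
  define c where "c = (1 + \<sigma>) / 2"
  have c1: "c > 1" using sig by (simp add: c_def)
  obtain M0 where M0: "M0 > 0" "\<forall>y::real^'n. (\<Sum>\<alpha>\<in>{\<alpha>::'n \<Rightarrow> nat. mi_order \<alpha> = m}. \<bar>dalpha \<alpha> (Phi c 1) y\<bar>) \<le> M0"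
    using dalpha_Phi1_bound[OF c1 m] by blast
  define C where "C = (lam - 1) * 2 powr (-lam) / (((2*M0/lam) * (2*M0/(lam/(lam-1))) powr (lam-1)) * sqrt \<sigma> powr (real m * lam - 1) * (sqrt \<sigma> - 1))"
  have s1: "sqrt \<sigma> > 1" using sig by simp
  have Cpos: "C > 0" unfolding C_def using lam M0 s1 by (intro divide_pos_pos mult_pos_pos) auto
  show ?thesis
  proof (rule exI[of _ C], intro conjI Cpos allI impI)
    fix aa :: "('n::finite \<Rightarrow> nat) \<Rightarrow> real^'n \<Rightarrow> real \<Rightarrow> real" and a b u :: "real^'n \<Rightarrow> real" and r1 r2 :: real
    assume H: "b \<in> borel_measurable lebesgue \<and> (\<forall>x. b x > 0) \<and>
      a \<in> borel_measurable lebesgue \<and> (\<forall>x. a x > 0) \<and>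
      (AE x in lebesgue. \<forall>\<alpha> \<zeta>. mi_order \<alpha> = m \<longrightarrow> \<bar>aa \<alpha> x \<zeta>\<bar> \<le> a x * \<bar>\<zeta>\<bar>) \<and>
      is_solution m lam aa b u \<and>
      0 < r1 \<and> r1 < r2 \<and> r2 = sqrt \<sigma> * r1 \<and>
      Jfun b lam u r2 \<le> 2 * Jfun b lam u r1 \<and> Jfun b lam u r1 > 0"
    then have bm: "b \<in> borel_measurable lebesgue" and bpos: "\<forall>x. b x > 0"
      and am: "a \<in> borel_measurable lebesgue" and apos: "\<forall>x. a x > 0"
      and AEb: "AE x in lebesgue. \<forall>\<alpha> \<zeta>. mi_order \<alpha> = m \<longrightarrow> \<bar>aa \<alpha> x \<zeta>\<bar> \<le> a x * \<bar>\<zeta>\<bar>"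
      and sol: "is_solution m lam aa b u"
      and r1: "0 < r1" and r12: "r1 < r2" and r2: "r2 = sqrt \<sigma> * r1"
      and J21: "Jfun b lam u r2 \<le> 2 * Jfun b lam u r1" and J1: "Jfun b lam u r1 > 0"
      by auto
    define J1 where "J1 = Jfun b lam u r1"
    define J2 where "J2 = Jfun b lam u r2"
    define I0e where "I0e = (\<integral>\<^sup>+ x \<in> ball 0 r2 - ball 0 r1. ennreal (a x powr (lam / (lam - 1)) * b x powr (- 1 / (lam - 1))) \<partial>lebesgue)"
    define e where "e = (real m - real CARD('n)) * lam + real CARD('n) - 1"
    define M where "M = M0 * r1 powr (- real m)"
    have Mpos: "M > 0" using M0 r1 by (simp add: M_def)
    note KI = key_ineq[OF lam sig m bm bpos am apos AEb sol r1 r12 r2 c_def M0(2)]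
    have J12: "J1 \<le> J2" using KI(2)[OF zero_less_one] by (simp add: J1_def J2_def)
    have K: "ennreal J1 \<le> ennreal (M * (t powr lam / lam)) * ennreal (J2 - J1) + ennreal (M * (t powr (-(lam/(lam-1))) / (lam/(lam-1)))) * I0e"
      if "t > 0" for t
      using KI(1)[OF that] by (simp add: J1_def J2_def I0e_def M_def)
    show "ennreal (Jfun b lam u r1 powr (1 - lam) - Jfun b lam u r2 powr (1 - lam))
         \<ge> ennreal C * (\<integral>\<^sup>+ r \<in> {r1..r2}.
               ennreal (r powr ((real m - real CARD('n)) * lam + real CARD('n) - 1) * hfun a b lam \<sigma> r) \<partial>lborel)"
    proof (cases "I0e = \<infinity>")
      case True
      have "(\<integral>\<^sup>+ r \<in> {r1..r2}. ennreal (r powr e * hfun a b lam \<sigma> r) \<partial>lborel) = (\<integral>\<^sup>+ (r::real). 0 \<partial>lborel)"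
      proof (rule nn_integral_cong)
        fix r
        show "ennreal (r powr e * hfun a b lam \<sigma> r) * indicator {r1..r2} r = 0"
        proof (cases "r \<in> {r1..r2}")
          case True
          then have "hfun a b lam \<sigma> r = 0"
            using hfun_zero[OF sig r1 r2, of r a lam b] \<open>I0e = \<infinity>\<close> by (simp add: I0e_def)
          then show ?thesis by simp
        qed simp
      qed
      then show ?thesis by (simp add: e_def)
    next
      case False
      define I0 where "I0 = enn2real I0e"
      have I0e: "I0e = ennreal I0" using False by (simp add: I0_def top.not_eq_extremum)
      have I0nn: "I0 \<ge> 0" by (simp add: I0_def)
      define q where "q = lam/(lam-1)"
      have q: "q > 0" using lam by (simp add: q_def)
      have Hr: "J1 \<le> M * (t powr lam / lam) * (J2 - J1) + M * (t powr (- q) / q) * I0" if "t > 0" for t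
      proof -
        have nn1: "M * (t powr lam / lam) \<ge> 0" using Mpos lam by simp
        have nn2: "M * (t powr (- q) / q) \<ge> 0" using Mpos q by simp
        have p1: "0 \<le> M * (t powr lam / lam) * (J2 - J1)" by (rule mult_nonneg_nonneg[OF nn1]) (use J12 in simp)
        have p2: "0 \<le> M * (t powr (- q) / q) * I0" by (rule mult_nonneg_nonneg[OF nn2 I0nn])
        have e1: "ennreal (M * (t powr lam / lam)) * ennreal (J2 - J1) = ennreal (M * (t powr lam / lam) * (J2 - J1))"
          by (rule ennreal_mult[symmetric]) (use nn1 J12 in auto)
        have e2: "ennreal (M * (t powr (- q) / q)) * ennreal I0 = ennreal (M * (t powr (- q) / q) * I0)"
          by (rule ennreal_mult[symmetric]) (use nn2 I0nn in auto)
        have e3: "ennreal (M * (t powr lam / lam) * (J2 - J1)) + ennreal (M * (t powr (- q) / q) * I0)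
            = ennreal (M * (t powr lam / lam) * (J2 - J1) + M * (t powr (- q) / q) * I0)"
          by (rule ennreal_plus[symmetric, OF p1 p2])
        have "ennreal J1 \<le> ennreal (M * (t powr lam / lam) * (J2 - J1) + M * (t powr (- q) / q) * I0)"
          using K[OF that, folded q_def] unfolding I0e e1 e2 e3 .
        then show ?thesis
          using ennreal_le_iff[OF add_nonneg_nonneg[OF p1 p2]] by simp
      qed
      have J1pos: "J1 > 0" using J1 by (simp add: J1_def)
      have I0pos: "I0 > 0"
      proof (rule ccontr)
        assume "\<not> I0 > 0"
        then have "I0 = 0" using I0nn by simp
        then show False
          using I0_zero_False[OF J1pos Mpos _ lam, of "J2 - J1"] Hr J12 by (simp add: q_def)
      qed
      have Y: "J1 powr lam \<le> (2*M/lam) * (2*M/(lam/(lam-1))) powr (lam-1) * (J2 - J1) * I0 powr (lam-1)"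
        by (rule young_opt[OF J1pos Mpos _ I0pos lam]) (use Hr J12 in \<open>auto simp: q_def\<close>)
      have FR: "C * (I0 powr (1-lam) * (sqrt \<sigma> * r1) powr (real m * lam - 1) * (sqrt \<sigma> * r1 - r1))
         \<le> J1 powr (1-lam) - J2 powr (1-lam)"
        unfolding C_def
        by (rule final_real[OF lam sig m M0(1) r1 J1pos J12 _ I0pos]) (use J21 Y in \<open>auto simp: J1_def J2_def M_def\<close>)
      define B where "B = I0 powr (1-lam) * r2 powr (real m * lam - 1)"
      have Bnn: "B \<ge> 0" by (simp add: B_def)
      have "(\<integral>\<^sup>+ r \<in> {r1..r2}. ennreal (r powr e * hfun a b lam \<sigma> r) \<partial>lborel) \<le> (\<integral>\<^sup>+ r \<in> {r1..r2}. ennreal B \<partial>lborel)"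
      proof (rule nn_integral_mono)
        fix r
        show "ennreal (r powr e * hfun a b lam \<sigma> r) * indicator {r1..r2} r \<le> ennreal B * indicator {r1..r2} r"
        proof (cases "r \<in> {r1..r2}")
          case True
          have "r powr e * hfun a b lam \<sigma> r \<le> B"
            unfolding e_def B_def
            by (rule hfun_bound[OF sig r1 r2 _ _ lam m I0pos]) (use True I0e in \<open>auto simp: I0e_def\<close>)
          then show ?thesis using True by (simp add: ennreal_leI)
        qed simp
      qed
      also have "\<dots> = ennreal B * ennreal (r2 - r1)"
        using r12 by (simp add: nn_integral_cmult_indicator)
      finally have RB: "(\<integral>\<^sup>+ r \<in> {r1..r2}. ennreal (r powr e * hfun a b lam \<sigma> r) \<partial>lborel) \<le> ennreal (B * (r2 - r1))"
        using Bnn r12 by (simp add: ennreal_mult)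
      have "ennreal C * (\<integral>\<^sup>+ r \<in> {r1..r2}. ennreal (r powr e * hfun a b lam \<sigma> r) \<partial>lborel) \<le> ennreal C * ennreal (B * (r2 - r1))"
        using RB by (rule mult_left_mono) simp
      also have "\<dots> = ennreal (C * (B * (r2 - r1)))" using Cpos Bnn r12 by (simp add: ennreal_mult)
      also have "\<dots> \<le> ennreal (J1 powr (1-lam) - J2 powr (1-lam))"
        using FR r2 by (intro ennreal_leI) (simp add: B_def mult_ac)
      finally show ?thesis by (simp add: e_def J1_def J2_def)
    qed
  qed
qed

end
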